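(* Let $A,K$ be real $n\times n$ matrices, $\alpha>0$, and $F_{A,K,\alpha}(u)=|Ku|^\alpha Au$ for $u\in\mathbb R^n$. (i) If $K$ is invertible and $F_{A,K,\alpha}$ is monotone, then $u^TAu\ge0$ for all $u\in\mathbb R^n$. (ii) If $F_{A,K,\alpha}$ is $\beta$-monotone for some $\beta>0$, then $A$ and $K$ are invertible, $\beta=\alpha+2$, and there is $C>0$ with $u^TAu\ge C|u|^2$ for all $u\in\mathbb R^n$.
   Context: $|\cdot|$ is the Euclidean norm. A map $F:\mathbb R^n\to\mathbb R^n$ is monotone if $(F(u)-F(v))\cdot(u-v)\ge0$ for all $u,v$; for $\beta>0$ it is $\beta$-monotone if there is $C>0$ with $(F(u)-F(v))\cdot(u-v)\ge C|u-v|^\beta$ for all $u,v$. *)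

theory Defs
  imports "HOL-Analysis.Analysis"
begin

definition monotone_map :: "(real^'n \<Rightarrow> real^'n) \<Rightarrow> bool" where
  "monotone_map F \<longleftrightarrow> (\<forall>u v. (F u - F v) \<bullet> (u - v) \<ge> 0)"

definition beta_monotone :: "real \<Rightarrow> (real^'n \<Rightarrow> real^'n) \<Rightarrow> bool" where
  "beta_monotone \<beta> F \<longleftrightarrow>
     (\<exists>C>0. \<forall>u v. (F u - F v) \<bullet> (u - v) \<ge> C * norm (u - v) powr \<beta>)"

definition F_AK :: "real^'n^'n \<Rightarrow> real^'n^'n \<Rightarrow> real \<Rightarrow> real^'n \<Rightarrow> real^'n" where
  "F_AK A K \<alpha> u = (norm (K *v u) powr \<alpha>) *\<^sub>R (A *v u)"

end

theory Submission
  imports Defs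
begin

lemma key: "(F_AK A K \<alpha> u - F_AK A K \<alpha> 0) \<bullet> (u - 0) = norm (K *v u) powr \<alpha> * (u \<bullet> (A *v u))"
  by (simp add: F_AK_def inner_commute)

lemma inv_of_ker:
  fixes A :: "real^'n^'n"
  assumes "\<And>x. x \<noteq> 0 \<Longrightarrow> A *v x \<noteq> 0"
  shows "invertible A"
  using assms unfolding invertible_left_inverse matrix_left_invertible_ker by blast

theorem mainTheorem9:
  fixes A K :: "real^'n^'n" and \<alpha> :: real
  assumes "\<alpha> > 0"
  shows "(invertible K \<and> monotone_map (F_AK A K \<alpha>) \<longrightarrow> (\<forall>u. u \<bullet> (A *v u) \<ge> 0))
       \<and> (\<forall>\<beta>>0. beta_monotone \<beta> (F_AK A K \<alpha>) \<longrightarrow>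
            invertible A \<and> invertible K \<and> \<beta> = \<alpha> + 2 \<and>
            (\<exists>C>0. \<forall>u. u \<bullet> (A *v u) \<ge> C * (norm u)\<^sup>2))"
proof (intro conjI impI allI)
  fix u :: "real^'n"
  assume h: "invertible K \<and> monotone_map (F_AK A K \<alpha>)"
  show "u \<bullet> (A *v u) \<ge> 0"
  proof (cases "u = 0")
    case True then show ?thesis by simp
  next
    case False
    have "K *v u \<noteq> 0"
      using h False unfolding invertible_left_inverse matrix_left_invertible_ker by blast
    then have p: "norm (K *v u) powr \<alpha> > 0" by simp
    have "norm (K *v u) powr \<alpha> * (u \<bullet> (A *v u)) \<ge> 0"
      using h unfolding monotone_map_def by (metis key)
    then show ?thesis using p by (simp add: zero_le_mult_iff)
  qed
next
  fix \<beta> :: real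
  assume bpos: "\<beta> > 0" and bm: "beta_monotone \<beta> (F_AK A K \<alpha>)"
  then obtain C where C: "C > 0" "\<And>u v. (F_AK A K \<alpha> u - F_AK A K \<alpha> v) \<bullet> (u - v) \<ge> C * norm (u - v) powr \<beta>"
    unfolding beta_monotone_def by blast
  have main: "norm (K *v u) powr \<alpha> * (u \<bullet> (A *v u)) \<ge> C * norm u powr \<beta>" for u
    using C(2)[of u 0] key[of A K \<alpha> u] by simp
  have pos: "K *v u \<noteq> 0 \<and> u \<bullet> (A *v u) > 0" if "u \<noteq> 0" for u
  proof -
    have "C * norm u powr \<beta> > 0" using C(1) that by simp
    then have g: "norm (K *v u) powr \<alpha> * (u \<bullet> (A *v u)) > 0" using main[of u] by linarith
    have "norm (K *v u) powr \<alpha> \<ge> 0" by simp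
    then have "norm (K *v u) powr \<alpha> > 0 \<and> u \<bullet> (A *v u) > 0"
      using g by (simp add: zero_less_mult_iff)
    then show ?thesis by auto
  qed
  show "invertible K" by (rule inv_of_ker) (use pos in blast)
  show "invertible A" by (rule inv_of_ker) (use pos in force)
  show "\<beta> = \<alpha> + 2"
  proof (rule ccontr)
    assume ne: "\<beta> \<noteq> \<alpha> + 2"
    define d where "d = \<alpha> + 2 - \<beta>"
    have d0: "d \<noteq> 0" using ne d_def by simp
    define u0 :: "real^'n" where "u0 = axis undefined 1"
    have nu0: "norm u0 = 1" by (simp add: u0_def)
    then have u00: "u0 \<noteq> 0" by auto
    define a where "a = norm (K *v u0)"
    define b where "b = u0 \<bullet> (A *v u0)"
    have a0: "a > 0" and b0: "b > 0" using pos[OF u00] by (auto simp: a_def b_def)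
    define M where "M = a powr \<alpha> * b"
    have M0: "M > 0" using a0 b0 by (simp add: M_def)
    have sc: "M * t powr d \<ge> C" if t: "t > 0" for t
    proof -
      have "norm (K *v (t *\<^sub>R u0)) powr \<alpha> * ((t *\<^sub>R u0) \<bullet> (A *v (t *\<^sub>R u0))) \<ge> C * norm (t *\<^sub>R u0) powr \<beta>"
        by (rule main)
      moreover have "norm (K *v (t *\<^sub>R u0)) powr \<alpha> = t powr \<alpha> * a powr \<alpha>"
        using t a0 by (simp add: matrix_vector_mult_scaleR a_def powr_mult)
      moreover have "(t *\<^sub>R u0) \<bullet> (A *v (t *\<^sub>R u0)) = t powr 2 * b"
        using t by (simp add: matrix_vector_mult_scaleR b_def power2_eq_square powr_numeral)
      moreover have "norm (t *\<^sub>R u0) powr \<beta> = t powr \<beta>" using t nu0 by simp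
      ultimately have "t powr \<alpha> * a powr \<alpha> * (t powr 2 * b) \<ge> C * t powr \<beta>" by simp
      then have "M * (t powr (\<alpha> + 2)) \<ge> C * t powr \<beta>"
        by (simp add: M_def powr_add mult_ac)
      moreover have "t powr (\<alpha> + 2) = t powr d * t powr \<beta>"
        by (simp add: d_def flip: powr_add)
      ultimately have "(M * t powr d) * t powr \<beta> \<ge> C * t powr \<beta>" by (simp add: mult_ac)
      then show ?thesis using t by simp
    qed
    define t where "t = (C / (2*M)) powr (1/d)"
    have tp: "t > 0" using C(1) M0 by (simp add: t_def)
    have "t powr d = C / (2*M)"
      using C(1) M0 d0 by (simp add: t_def powr_powr)
    then have "M * t powr d = C / 2" using M0 by simp
    then show False using sc[OF tp] C(1) by simp
  qed
  then have bb: "\<beta> = \<alpha> + 2" .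
  obtain B where B: "B > 0" "\<And>x. norm (K *v x) \<le> B * norm x"
    using linear_bounded_pos[OF matrix_vector_mul_linear] by blast
  show "\<exists>C>0. \<forall>u. u \<bullet> (A *v u) \<ge> C * (norm u)\<^sup>2"
  proof (intro exI[of _ "C / B powr \<alpha>"] conjI allI)
    show "C / B powr \<alpha> > 0" using C(1) B(1) by simp
    fix u :: "real^'n"
    show "u \<bullet> (A *v u) \<ge> C / B powr \<alpha> * (norm u)\<^sup>2"
    proof (cases "u = 0")
      case True then show ?thesis by simp
    next
      case False
      have bp: "u \<bullet> (A *v u) > 0" using pos[OF False] by blast
      have nu: "norm u > 0" using False by simp
      have "norm (K *v u) powr \<alpha> \<le> (B * norm u) powr \<alpha>"
        using B(2)[of u] assms by (intro powr_mono2) auto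
      also have "\<dots> = B powr \<alpha> * norm u powr \<alpha>" using B(1) nu by (simp add: powr_mult)
      finally have le: "norm (K *v u) powr \<alpha> \<le> B powr \<alpha> * norm u powr \<alpha>" .
      have "C * (norm u powr \<alpha> * (norm u)\<^sup>2) = C * norm u powr \<beta>"
        using nu bb by (simp add: powr_add powr_numeral)
      also have "\<dots> \<le> norm (K *v u) powr \<alpha> * (u \<bullet> (A *v u))" by (rule main)
      also have "\<dots> \<le> B powr \<alpha> * norm u powr \<alpha> * (u \<bullet> (A *v u))"
        using le bp by (intro mult_right_mono) auto
      finally have "norm u powr \<alpha> * (C * (norm u)\<^sup>2) \<le> norm u powr \<alpha> * (B powr \<alpha> * (u \<bullet> (A *v u)))"
        by (simp add: mult_ac)
      then have "C * (norm u)\<^sup>2 \<le> B powr \<alpha> * (u \<bullet> (A *v u))"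
        using nu by (simp add: mult_le_cancel_left_pos)
      then show ?thesis using B(1) by (simp add: field_simps)
    qed
  qed
qed

end
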